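(* Let $\hat\Omega\in\mathfrak{R}^n$, let $f:\hat\Omega\to\mathbb{R}^n$ and $G:\hat\Omega\to\mathbb{R}^{n\times m}$ with $f(0)=0$, and consider $\dot x=f(x)+G(x)u$, $x\in\hat\Omega$, with $u=\kappa(t)$ for $t\ge0$. Let $\mathcal{T}=\{\sigma_i\}_{i=1}^{m_{\mathcal{T}}}$, $\sigma_i=\mathrm{co}(\{x_{i,j}\}_{j=0}^n)$, be a triangulation of $\hat\Omega$ with $f,G\in\mathcal{C}^2(\mathcal{T})$. Let $\mathcal{A}_1\in\mathfrak{R}^n$ with $\mathcal{A}_1\subset\hat\Omega$ and $\partial\mathcal{A}_1$ contained in the union of the boundaries $\partial\sigma_i$, and let $\mathbb{I}_1=\{i\in\mathbb{Z}_1^{m_{\mathcal{T}}}:\sigma_i\not\subseteq\mathcal{A}_1\}$. For each $i$ let $\beta_i\ge\max_{p,q,r\in\mathbb{Z}_1^n}\max_{\xi\in\sigma_i}\big|\partial^2 f^{(p)}/\partial x^{(q)}\partial x^{(r)}(\xi)\big|$, let $\hat g_i=\max_{x\in\sigma_i}\|G(x)\|_\infty$, and let $c_{i,j}=\tfrac{n}{2}\|x_{i,j}-x_{i,0}\|_2(\max_{k\in\mathbb{Z}_1^n}\|x_{i,k}-x_{i,0}\|_2+\|x_{i,j}-x_{i,0}\|_2)$. For vertex values $\mathbf{W}=\{W_x\}_{x\in\mathbb{E}_{\mathcal{T}}}$, vectors $\hat{\mathbf{L}}=\{\hat l_i\}\subset\mathbb{R}^n$ and scalars $b_2,\hat u$,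 set $D^+_{i,j}W=f(x_{i,j})^\intercal\nabla W_i+(1_n^\intercal\hat l_i)(\beta_i c_{i,j}+\hat g_i\hat u)$. Then there exist $\mathbf{W},\hat{\mathbf{L}},b_2,\hat u$ satisfying (i) $\hat u>0$; (ii) $W_x>0$ for all $x\in\mathbb{E}_{\mathcal{T}}$; (iii) $|\nabla W_i|\le\hat l_i$ (componentwise) for all $i$; (iv) $D^+_{i,j}W\le -b_2$ for all $i\in\mathbb{I}_1$, $j\in\mathbb{Z}_0^n$. Suppose further that such values satisfy $b_2>0$ and that there is a sublevel set $\mathcal{A}=\{x\in\hat\Omega: W(x)\le c\}$ of the CPA interpolation $W$ of $\mathbf{W}$ with $\mathcal{A}_1\subset\mathcal{A}\subseteq\hat\Omega$. Then, provided $\|\kappa(t)\|_\infty\le\hat u$ for all $t\ge0$, the restriction of $W$ to $\mathcal{A}^\circ$ is a barrier function, i.e.: $W$ is Lipschitz, $W(x)>0$ for all $x\in\hat\Omega$, and $D^+W(x)\le -b_2$ for all $x\in(\hat\Omega\setminus\mathcal{A}_1)^\circ$, where $D^+W$ is the Dini derivative of $W$ along $\dot x=f(x)+G(x)u$ with $\|u\|_\infty\le\hat u$.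
   Context: $\mathfrak{R}^n$: compact sets $\Omega\subset\mathbb{R}^n$ with connected interior containing $0$ and $\Omega=\overline{\Omega^\circ}$. A triangulation of $\Omega$ is a finite collection of $n$-simplexes (convex hulls of $n+1$ affinely independent vertices) with union $\Omega$, any two meeting in a common face or not at all; $\mathbb{E}_{\mathcal{T}}$ is its vertex set; the vertex $x_{i,0}$ is arbitrary unless $0\in\sigma_i$, in which case $x_{i,0}=0$. $\mathcal{C}^2(\mathcal{T})$: continuous and $\mathcal{C}^2$ on each simplex. With $X_i$ the matrix with rows $(x_{i,j}-x_{i,0})^\intercal$ and $\bar W_i$ the vector with entries $W_{x_{i,j}}-W_{x_{i,0}}$, $\nabla W_i=X_i^{-1}\bar W_i$, and the CPA interpolation $W$ is the unique continuous function affine on each $\sigma_i$ with gradient $\nabla W_i$ and $W(x)=W_x$ at vertices. The Dini derivative is $D^+W(x)=\limsup_{h\to0^+}(W(x+h\,v)-W(x))/h$ with $v=f(x)+G(x)u$. $\|G\|_\infty$ is the induced $\infty$-norm, $1_n$ the all-ones vector, $|v|$ componentwise absolute value. *)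

theory Defs
  imports "HOL-Analysis.Analysis"
begin

definition region :: "(real^'n) set \<Rightarrow> bool" where
  "region \<Omega> \<longleftrightarrow> compact \<Omega> \<and> connected (interior \<Omega>) \<and> 0 \<in> interior \<Omega>
      \<and> \<Omega> = closure (interior \<Omega>)"

definition tsimplex :: "(nat \<Rightarrow> nat \<Rightarrow> real^'n) \<Rightarrow> nat \<Rightarrow> (real^'n) set" where
  "tsimplex x i = convex hull (x i ` {0..CARD('n)})"

definition triangulation :: "(real^'n) set \<Rightarrow> nat \<Rightarrow> (nat \<Rightarrow> nat \<Rightarrow> real^'n) \<Rightarrow> bool" where
  "triangulation \<Omega> mT x \<longleftrightarrow>
     (\<forall>i\<in>{1..mT}. inj_on (x i) {0..CARD('n)} \<and> \<not> affine_dependent (x i ` {0..CARD('n)}))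
   \<and> (\<Union>i\<in>{1..mT}. tsimplex x i) = \<Omega>
   \<and> (\<forall>i\<in>{1..mT}. \<forall>k\<in>{1..mT}. i \<noteq> k \<longrightarrow>
        tsimplex x i \<inter> tsimplex x k = convex hull (x i ` {0..CARD('n)} \<inter> x k ` {0..CARD('n)}))
   \<and> (\<forall>i\<in>{1..mT}. 0 \<in> tsimplex x i \<longrightarrow> x i 0 = 0)"

definition vertices :: "nat \<Rightarrow> (nat \<Rightarrow> nat \<Rightarrow> real^'n) \<Rightarrow> (real^'n) set" where
  "vertices mT x = (\<Union>i\<in>{1..mT}. x i ` {0..CARD('n)})"

definition second_partials ::
  "(real^'n \<Rightarrow> real) \<Rightarrow> (real^'n) set \<Rightarrow> ('n \<Rightarrow> 'n \<Rightarrow> real^'n \<Rightarrow> real) \<Rightarrow> bool" where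
  "second_partials g S d2 \<longleftrightarrow> (\<exists>d1 :: 'n \<Rightarrow> real^'n \<Rightarrow> real.
      (\<forall>y\<in>S. (g has_derivative (\<lambda>h. \<Sum>q\<in>UNIV. d1 q y * h $ q)) (at y within S))
    \<and> (\<forall>q. \<forall>y\<in>S. (d1 q has_derivative (\<lambda>h. \<Sum>r\<in>UNIV. d2 q r y * h $ r)) (at y within S)))"

definition C2_on :: "(real^'n \<Rightarrow> real) \<Rightarrow> (real^'n) set \<Rightarrow> bool" where
  "C2_on g S \<longleftrightarrow> (\<exists>d2. second_partials g S d2 \<and> (\<forall>q r. continuous_on S (d2 q r)))"

text \<open>Induced infinity norm of a matrix (max absolute row sum).\<close>
definition matnorm_inf :: "real^'m^'n \<Rightarrow> real" where
  "matnorm_inf A = Max (range (\<lambda>p. \<Sum>k\<in>UNIV. \<bar>A $ p $ k\<bar>))"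

text \<open>A fixed enumeration of the index type 'n by 1..n (rows j = 1..n of X_i).\<close>
definition vidx :: "'n::finite \<Rightarrow> nat" where
  "vidx = (SOME e. bij_betw e (UNIV :: 'n set) {1..CARD('n)})"

definition Xmat :: "(nat \<Rightarrow> nat \<Rightarrow> real^'n) \<Rightarrow> nat \<Rightarrow> real^'n^'n" where
  "Xmat x i = (\<chi> k. x i (vidx k) - x i 0)"

definition Wbar :: "(nat \<Rightarrow> nat \<Rightarrow> real^'n) \<Rightarrow> (real^'n \<Rightarrow> real) \<Rightarrow> nat \<Rightarrow> real^'n" where
  "Wbar x Wv i = (\<chi> k. Wv (x i (vidx k)) - Wv (x i 0))"

definition cpa_grad :: "(nat \<Rightarrow> nat \<Rightarrow> real^'n) \<Rightarrow> (real^'n \<Rightarrow> real) \<Rightarrow> nat \<Rightarrow> real^'n" where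
  "cpa_grad x Wv i = matrix_inv (Xmat x i) *v Wbar x Wv i"

definition cpa :: "nat \<Rightarrow> (nat \<Rightarrow> nat \<Rightarrow> real^'n) \<Rightarrow> (real^'n \<Rightarrow> real) \<Rightarrow> real^'n \<Rightarrow> real" where
  "cpa mT x Wv y = (let i = (SOME i. i \<in> {1..mT} \<and> y \<in> tsimplex x i)
                    in Wv (x i 0) + cpa_grad x Wv i \<bullet> (y - x i 0))"

definition ghat :: "(real^'n \<Rightarrow> real^'m^'n) \<Rightarrow> (nat \<Rightarrow> nat \<Rightarrow> real^'n) \<Rightarrow> nat \<Rightarrow> real" where
  "ghat G x i = Sup ((\<lambda>y. matnorm_inf (G y)) ` tsimplex x i)"

definition cij :: "(nat \<Rightarrow> nat \<Rightarrow> real^'n) \<Rightarrow> nat \<Rightarrow> nat \<Rightarrow> real" where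
  "cij x i j = real CARD('n) / 2 * norm (x i j - x i 0)
      * (Max ((\<lambda>k. norm (x i k - x i 0)) ` {1..CARD('n)}) + norm (x i j - x i 0))"

definition Dij :: "(real^'n \<Rightarrow> real^'n) \<Rightarrow> (real^'n \<Rightarrow> real^'m^'n) \<Rightarrow> (nat \<Rightarrow> nat \<Rightarrow> real^'n)
    \<Rightarrow> (nat \<Rightarrow> real) \<Rightarrow> (real^'n \<Rightarrow> real) \<Rightarrow> (nat \<Rightarrow> real^'n) \<Rightarrow> real \<Rightarrow> nat \<Rightarrow> nat \<Rightarrow> real" where
  "Dij f G x \<beta> Wv l uh i j = f (x i j) \<bullet> cpa_grad x Wv i
      + (\<Sum>k\<in>UNIV. l i $ k) * (\<beta> i * cij x i j + ghat G x i * uh)"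

definition I1 :: "nat \<Rightarrow> (nat \<Rightarrow> nat \<Rightarrow> real^'n) \<Rightarrow> (real^'n) set \<Rightarrow> nat set" where
  "I1 mT x A1 = {i\<in>{1..mT}. \<not> tsimplex x i \<subseteq> A1}"

definition cpa_conditions :: "(real^'n \<Rightarrow> real^'n) \<Rightarrow> (real^'n \<Rightarrow> real^'m^'n) \<Rightarrow> nat
    \<Rightarrow> (nat \<Rightarrow> nat \<Rightarrow> real^'n) \<Rightarrow> (nat \<Rightarrow> real) \<Rightarrow> (real^'n) set
    \<Rightarrow> (real^'n \<Rightarrow> real) \<Rightarrow> (nat \<Rightarrow> real^'n) \<Rightarrow> real \<Rightarrow> real \<Rightarrow> bool" where
  "cpa_conditions f G mT x \<beta> A1 Wv l b2 uh \<longleftrightarrow>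
      uh > 0
    \<and> (\<forall>y\<in>vertices mT x. Wv y > 0)
    \<and> (\<forall>i\<in>{1..mT}. \<forall>k. \<bar>cpa_grad x Wv i $ k\<bar> \<le> l i $ k)
    \<and> (\<forall>i\<in>I1 mT x A1. \<forall>j\<in>{0..CARD('n)}. Dij f G x \<beta> Wv l uh i j \<le> - b2)"

definition dini_upper :: "(real^'n \<Rightarrow> real) \<Rightarrow> real^'n \<Rightarrow> real^'n \<Rightarrow> ereal" where
  "dini_upper W y v = Limsup (at_right 0) (\<lambda>h. ereal ((W (y + h *\<^sub>R v) - W y) / h))"

end

theory Submission
  imports Defs
begin


lemma chain_line:
  fixes g :: "real^'n \<Rightarrow> real"
  assumes dg: "\<forall>y\<in>S. (g has_derivative (\<lambda>h. \<Sum>q\<in>UNIV. e q y * h $ q)) (at y within S)"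
    and sub: "(\<lambda>t. a + t *\<^sub>R d) ` {0..1} \<subseteq> S" and t: "t \<in> {0..1}"
  shows "((\<lambda>t. g (a + t *\<^sub>R d)) has_real_derivative (\<Sum>q\<in>UNIV. e q (a + t *\<^sub>R d) * d $ q)) (at t within {0..1})"
proof -
  have lin: "((\<lambda>t. a + t *\<^sub>R d) has_derivative (\<lambda>s. s *\<^sub>R d)) (at t within {0..1})"
    by (auto intro!: derivative_eq_intros)
  have "((\<lambda>t. g (a + t *\<^sub>R d)) has_derivative (\<lambda>s. \<Sum>q\<in>UNIV. e q (a + t *\<^sub>R d) * (s *\<^sub>R d) $ q)) (at t within {0..1})"
    using has_derivative_in_compose2[OF _ sub t lin, of g "\<lambda>y h. \<Sum>q\<in>UNIV. e q y * h $ q"] dg by auto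
  moreover have "(\<lambda>s. \<Sum>q\<in>UNIV. e q (a + t *\<^sub>R d) * (s *\<^sub>R d) $ q) = (*) (\<Sum>q\<in>UNIV. e q (a + t *\<^sub>R d) * d $ q)"
    by (auto simp: sum_distrib_left algebra_simps)
  ultimately show ?thesis by (simp add: has_field_derivative_def)
qed

lemma deriv_mono_01:
  fixes \<rho> \<rho>' :: "real \<Rightarrow> real"
  assumes d: "\<And>s. s \<in> {0..1} \<Longrightarrow> (\<rho> has_real_derivative \<rho>' s) (at s within {0..1})"
    and neg: "\<And>s. s \<in> {0..1} \<Longrightarrow> \<rho>' s \<le> 0" and t: "t \<in> {0..1}"
  shows "\<rho> t \<le> \<rho> 0"
proof -
  have c: "continuous_on {0..1} \<rho>" using d by (rule DERIV_continuous_on)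
  show ?thesis
  proof (rule DERIV_nonpos_imp_decreasing_open[of 0 t])
    show "0 \<le> t" using t by auto
    show "continuous_on {0..t} \<rho>" using c t by (auto intro: continuous_on_subset)
    fix s assume s: "0 < s" "s < t"
    then have "at s within {0..1} = at s" using t by (intro at_within_Icc_at) auto
    then show "\<exists>y. (\<rho> has_real_derivative y) (at s) \<and> y \<le> 0"
      using d[of s] neg[of s] s t by auto
  qed
qed

lemma taylor_bound:
  fixes \<phi> :: "real^'n \<Rightarrow> real"
  assumes cvx: "convex S" and a: "a \<in> S" and b: "b \<in> S"
    and d1: "\<forall>y\<in>S. (\<phi> has_derivative (\<lambda>h. \<Sum>q\<in>UNIV. d1 q y * h $ q)) (at y within S)"
    and d2: "\<forall>q. \<forall>y\<in>S. (d1 q has_derivative (\<lambda>h. \<Sum>r\<in>UNIV. d2 q r y * h $ r)) (at y within S)"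
    and bnd: "\<forall>q r. \<forall>\<xi>\<in>S. \<bar>d2 q r \<xi>\<bar> \<le> \<beta>"
  shows "\<bar>\<phi> b - \<phi> a - (\<Sum>q\<in>UNIV. d1 q a * (b - a) $ q)\<bar> \<le> \<beta> / 2 * (\<Sum>q\<in>UNIV. \<bar>(b - a) $ q\<bar>)^2"
proof -
  define d where "d = b - a"
  define \<gamma> where "\<gamma> t = a + t *\<^sub>R d" for t :: real
  define D where "D t = (\<Sum>q\<in>UNIV. d1 q (\<gamma> t) * d $ q)" for t
  define D' where "D' t = (\<Sum>q\<in>UNIV. (\<Sum>r\<in>UNIV. d2 q r (\<gamma> t) * d $ r) * d $ q)" for t
  define M where "M = \<beta> * (\<Sum>q\<in>UNIV. \<bar>d $ q\<bar>)^2"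
  have sub: "(\<lambda>t. a + t *\<^sub>R d) ` {0..1} \<subseteq> S"
  proof
    fix z assume "z \<in> (\<lambda>t. a + t *\<^sub>R d) ` {0..1}"
    then obtain t where t: "t \<in> {0..1}" "z = a + t *\<^sub>R d" by auto
    have "(1 - t) *\<^sub>R a + t *\<^sub>R b \<in> S" using cvx a b t by (auto simp: convex_alt)
    moreover have "(1 - t) *\<^sub>R a + t *\<^sub>R b = z" using t by (simp add: d_def algebra_simps)
    ultimately show "z \<in> S" by simp
  qed
  have g01: "\<gamma> t \<in> S" if "t \<in> {0..1}" for t using sub that by (auto simp: \<gamma>_def image_subset_iff)
  have dphi: "((\<lambda>t. \<phi> (\<gamma> t)) has_real_derivative D t) (at t within {0..1})" if "t \<in> {0..1}" for t
    using chain_line[OF d1 sub that] by (simp add: \<gamma>_def D_def)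
  have dD: "(D has_real_derivative D' t) (at t within {0..1})" if "t \<in> {0..1}" for t
    unfolding D_def D'_def
    apply (rule DERIV_sum)
    apply (rule DERIV_cmult_right)
    using chain_line[OF _ sub that, of "d1 _" "d2 _"] d2 by (simp add: \<gamma>_def)
  have D'b: "\<bar>D' t\<bar> \<le> M" if "t \<in> {0..1}" for t
  proof -
    have "\<bar>D' t\<bar> \<le> (\<Sum>q\<in>UNIV. \<bar>(\<Sum>r\<in>UNIV. d2 q r (\<gamma> t) * d $ r) * d $ q\<bar>)"
      unfolding D'_def by (rule sum_abs)
    also have "\<dots> \<le> (\<Sum>q\<in>UNIV. (\<Sum>r\<in>UNIV. \<beta> * \<bar>d $ r\<bar>) * \<bar>d $ q\<bar>)"
    proof (rule sum_mono)
      fix q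
      have "\<bar>(\<Sum>r\<in>UNIV. d2 q r (\<gamma> t) * d $ r)\<bar> \<le> (\<Sum>r\<in>UNIV. \<bar>d2 q r (\<gamma> t) * d $ r\<bar>)" by (rule sum_abs)
      also have "\<dots> \<le> (\<Sum>r\<in>UNIV. \<beta> * \<bar>d $ r\<bar>)"
        by (rule sum_mono) (use bnd g01[OF that] in \<open>auto simp: abs_mult intro!: mult_right_mono\<close>)
      finally show "\<bar>(\<Sum>r\<in>UNIV. d2 q r (\<gamma> t) * d $ r) * d $ q\<bar> \<le> (\<Sum>r\<in>UNIV. \<beta> * \<bar>d $ r\<bar>) * \<bar>d $ q\<bar>"
        by (simp add: abs_mult mult_right_mono)
    qed
    also have "\<dots> = M" by (simp add: M_def power2_eq_square sum_distrib_left sum_distrib_right algebra_simps)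
    finally show ?thesis .
  qed
  have D'b2: "D' t \<le> M" "- D' t \<le> M" if "t \<in> {0..1}" for t using D'b[OF that] by auto
  have Dlin: "\<bar>D t - D 0\<bar> \<le> M * t" if t: "t \<in> {0..1}" for t
  proof -
    have "(\<lambda>s. (D s - D 0) - M * s) t \<le> (\<lambda>s. (D s - D 0) - M * s) 0"
      by (rule deriv_mono_01[OF _ _ t, where \<rho>'="\<lambda>s. D' s - M"])
        (auto intro!: derivative_eq_intros dD simp: D'b2)
    moreover have "(\<lambda>s. (D 0 - D s) - M * s) t \<le> (\<lambda>s. (D 0 - D s) - M * s) 0"
      by (rule deriv_mono_01[OF _ _ t, where \<rho>'="\<lambda>s. - D' s - M"])
        (auto intro!: derivative_eq_intros dD simp: D'b2)
    ultimately show ?thesis by auto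
  qed
  define \<psi> where "\<psi> t = \<phi> (\<gamma> t) - \<phi> a - t * D 0" for t
  have dpsi: "(\<psi> has_real_derivative (D t - D 0)) (at t within {0..1})" if "t \<in> {0..1}" for t
    unfolding \<psi>_def using that by (auto intro!: derivative_eq_intros dphi)
  have "(\<lambda>s. \<psi> s - M / 2 * s^2) 1 \<le> (\<lambda>s. \<psi> s - M / 2 * s^2) 0"
    by (rule deriv_mono_01[where \<rho>'="\<lambda>s. (D s - D 0) - M * s"])
       (use Dlin in \<open>auto intro!: derivative_eq_intros dpsi simp: abs_le_iff\<close>)
  moreover have "(\<lambda>s. - \<psi> s - M / 2 * s^2) 1 \<le> (\<lambda>s. - \<psi> s - M / 2 * s^2) 0"
    by (rule deriv_mono_01[where \<rho>'="\<lambda>s. - (D s - D 0) - M * s"])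
       (use Dlin in \<open>auto intro!: derivative_eq_intros dpsi simp: abs_le_iff\<close>)
  moreover have "\<psi> 0 = 0" by (simp add: \<psi>_def \<gamma>_def)
  ultimately have "\<bar>\<psi> 1\<bar> \<le> M / 2" by (simp add: abs_le_iff)
  moreover have "\<psi> 1 = \<phi> b - \<phi> a - (\<Sum>q\<in>UNIV. d1 q a * (b - a) $ q)"
    by (simp add: \<psi>_def \<gamma>_def D_def d_def)
  ultimately show ?thesis by (simp add: M_def d_def)
qed

lemma vidx_bij: "bij_betw (vidx :: 'n::finite \<Rightarrow> nat) UNIV {1..CARD('n)}"
proof -
  have "\<exists>e. bij_betw e (UNIV::'n set) {1..CARD('n)}" by (rule finite_same_card_bij) auto
  then show ?thesis unfolding vidx_def by (rule someI_ex)
qed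

lemma Xmat_inv:
  fixes x :: "nat \<Rightarrow> nat \<Rightarrow> real^'n"
  assumes inj: "inj_on (x i) {0..CARD('n)}" and ai: "\<not> affine_dependent (x i ` {0..CARD('n)})"
  shows "Xmat x i *v (matrix_inv (Xmat x i) *v w) = w"
proof -
  define a where "a = x i 0"
  define S where "S = x i ` {1..CARD('n)}"
  have ins: "insert a S = x i ` {0..CARD('n)}"
    unfolding a_def S_def by (auto simp: image_iff) (metis Suc_le_eq atLeastAtMost_iff not_gr_zero)
  have aS: "a \<notin> S" using inj unfolding a_def S_def inj_on_def by fastforce
  define T where "T = (\<lambda>z. -a + z) ` S"
  have indT: "\<not> dependent T" using ai affine_dependent_iff_dependent[OF aS] ins unfolding T_def by simp
  define r where "r k = - a + x i (vidx k)" for k :: 'n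
  have vb: "bij_betw (vidx :: 'n \<Rightarrow> nat) UNIV {1..CARD('n)}" by (rule vidx_bij)
  have "vidx ` (UNIV::'n set) = {1..CARD('n)}" using vb by (simp add: bij_betw_def)
  moreover have "r ` UNIV = (\<lambda>z. -a + z) ` (x i ` (vidx ` (UNIV::'n set)))" by (simp add: r_def image_image)
  ultimately have rT: "r ` UNIV = T" unfolding T_def S_def by simp
  have injr: "inj r"
  proof
    fix k1 k2 assume "r k1 = r k2"
    then have "x i (vidx k1) = x i (vidx k2)" by (simp add: r_def)
    moreover have "vidx k1 \<in> {0..CARD('n)}" "vidx k2 \<in> {0..CARD('n)}" using vb by (auto simp: bij_betw_def)
    ultimately have "vidx k1 = vidx k2" using inj by (auto simp: inj_on_def)
    then show "k1 = k2" using vb by (auto simp: bij_betw_def inj_on_def)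
  qed
  have rowX: "row k (Xmat x i) = r k" for k
    by (simp add: row_def Xmat_def r_def a_def vec_eq_iff)
  have "\<exists>B. Xmat x i ** B = mat 1"
    unfolding matrix_right_invertible_independent_rows
  proof (intro allI impI)
    fix c :: "'n \<Rightarrow> real" and k
    assume h: "(\<Sum>k\<in>UNIV. c k *s row k (Xmat x i)) = 0"
    have fT: "finite T" unfolding T_def S_def by simp
    have "(\<Sum>v\<in>T. (c (inv r v)) *\<^sub>R v) = (\<Sum>k\<in>UNIV. c (inv r (r k)) *\<^sub>R r k)"
      unfolding rT[symmetric] by (rule sum.reindex[OF injr, unfolded comp_def])
    also have "\<dots> = (\<Sum>k\<in>UNIV. c k *s row k (Xmat x i))"
      using injr by (simp add: rowX scalar_mult_eq_scaleR)
    finally have "(\<Sum>v\<in>T. (c (inv r v)) *\<^sub>R v) = 0" using h by simp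
    then have "\<forall>v\<in>T. c (inv r v) = 0"
      using independent_explicit[THEN iffD1, OF indT, THEN conjunct2, rule_format, of "\<lambda>v. c (inv r v)"] by simp
    then have "c (inv r (r k)) = 0" using rT by blast
    then show "c k = 0" using injr by simp
  qed
  then obtain B where B: "Xmat x i ** B = mat 1" by blast
  then have "invertible (Xmat x i)" unfolding invertible_def using matrix_left_right_inverse by blast
  then have "Xmat x i ** matrix_inv (Xmat x i) = mat 1"
    unfolding invertible_def matrix_inv_def by (rule someI_ex[THEN conjunct1])
  then show ?thesis by (simp add: matrix_vector_mul_assoc)
qed

definition Aff :: "(nat \<Rightarrow> nat \<Rightarrow> real^'n) \<Rightarrow> (real^'n \<Rightarrow> real) \<Rightarrow> nat \<Rightarrow> real^'n \<Rightarrow> real" where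
  "Aff x Wv i y = Wv (x i 0) + cpa_grad x Wv i \<bullet> (y - x i 0)"

lemma Aff_form: "Aff x Wv i y = (Wv (x i 0) - cpa_grad x Wv i \<bullet> x i 0) + cpa_grad x Wv i \<bullet> y"
  by (simp add: Aff_def inner_diff_right)

lemma tri_simp:
  fixes x :: "nat \<Rightarrow> nat \<Rightarrow> real^'n"
  assumes "triangulation \<Omega> mT x" "i \<in> {1..mT}"
  shows "inj_on (x i) {0..CARD('n)}" "\<not> affine_dependent (x i ` {0..CARD('n)})"
  using assms unfolding triangulation_def by auto

lemma Aff_interp:
  fixes x :: "nat \<Rightarrow> nat \<Rightarrow> real^'n"
  assumes inj: "inj_on (x i) {0..CARD('n)}" and ai: "\<not> affine_dependent (x i ` {0..CARD('n)})"
    and j: "j \<in> {0..CARD('n)}"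
  shows "Aff x Wv i (x i j) = Wv (x i j)"
proof (cases "j = 0")
  case True then show ?thesis by (simp add: Aff_def)
next
  case False
  have vb: "bij_betw (vidx :: 'n \<Rightarrow> nat) UNIV {1..CARD('n)}" by (rule vidx_bij)
  have "j \<in> vidx ` (UNIV :: 'n set)" using vb j False by (auto simp: bij_betw_def)
  then obtain k :: 'n where k: "vidx k = j" by blast
  have "Xmat x i *v cpa_grad x Wv i = Wbar x Wv i"
    unfolding cpa_grad_def by (rule Xmat_inv[where x=x and i=i, OF inj ai])
  then have "(Xmat x i *v cpa_grad x Wv i) $ k = Wbar x Wv i $ k" by simp
  then have "(x i j - x i 0) \<bullet> cpa_grad x Wv i = Wv (x i j) - Wv (x i 0)"
    by (simp add: matrix_vector_mul_component Xmat_def Wbar_def k)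
  then show ?thesis by (simp add: Aff_def inner_commute)
qed

lemma Aff_consistent:
  fixes x :: "nat \<Rightarrow> nat \<Rightarrow> real^'n"
  assumes tri: "triangulation \<Omega> mT x" and i: "i \<in> {1..mT}" and k: "k \<in> {1..mT}"
    and yi: "y \<in> tsimplex x i" and yk: "y \<in> tsimplex x k"
  shows "Aff x Wv i y = Aff x Wv k y"
proof (cases "i = k")
  case True then show ?thesis by simp
next
  case False
  have y: "y \<in> convex hull (x i ` {0..CARD('n)} \<inter> x k ` {0..CARD('n)})"
    using tri i k yi yk False unfolding triangulation_def by blast
  define ci where "ci = Wv (x i 0) - cpa_grad x Wv i \<bullet> x i 0"
  define ck where "ck = Wv (x k 0) - cpa_grad x Wv k \<bullet> x k 0"
  have eq: "{z. Aff x Wv i z = Aff x Wv k z} = {z. (cpa_grad x Wv i - cpa_grad x Wv k) \<bullet> z = ck - ci}"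
    by (auto simp: Aff_form ci_def ck_def inner_diff_left)
  have "x i ` {0..CARD('n)} \<inter> x k ` {0..CARD('n)} \<subseteq> {z. Aff x Wv i z = Aff x Wv k z}"
  proof
    fix v assume "v \<in> x i ` {0..CARD('n)} \<inter> x k ` {0..CARD('n)}"
    then obtain j j' where j: "j \<in> {0..CARD('n)}" "v = x i j" and j': "j' \<in> {0..CARD('n)}" "v = x k j'" by blast
    have "Aff x Wv i v = Wv v" using Aff_interp[where x=x and i=i, OF tri_simp[OF tri i] j(1)] j by simp
    moreover have "Aff x Wv k v = Wv v" using Aff_interp[where x=x and i=k, OF tri_simp[OF tri k] j'(1)] j' by simp
    ultimately show "v \<in> {z. Aff x Wv i z = Aff x Wv k z}" by simp
  qed
  then have "convex hull (x i ` {0..CARD('n)} \<inter> x k ` {0..CARD('n)}) \<subseteq> {z. Aff x Wv i z = Aff x Wv k z}"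
    by (rule hull_minimal) (simp add: eq convex_hyperplane)
  then show ?thesis using y by blast
qed

lemma cpa_eq:
  fixes x :: "nat \<Rightarrow> nat \<Rightarrow> real^'n"
  assumes tri: "triangulation \<Omega> mT x" and i: "i \<in> {1..mT}" and yi: "y \<in> tsimplex x i"
  shows "cpa mT x Wv y = Aff x Wv i y"
proof -
  define i' where "i' = (SOME i. i \<in> {1..mT} \<and> y \<in> tsimplex x i)"
  have "i' \<in> {1..mT} \<and> y \<in> tsimplex x i'" unfolding i'_def by (rule someI[of _ i]) (use i yi in auto)
  then have "Aff x Wv i' y = Aff x Wv i y" using Aff_consistent[OF tri _ i _ yi] by blast
  moreover have "cpa mT x Wv y = Aff x Wv i' y" by (simp only: cpa_def Let_def Aff_def i'_def)
  ultimately show ?thesis by simp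
qed

lemma Aff_pos:
  fixes x :: "nat \<Rightarrow> nat \<Rightarrow> real^'n"
  assumes tri: "triangulation \<Omega> mT x" and i: "i \<in> {1..mT}" and yi: "y \<in> tsimplex x i"
    and pos: "\<forall>v\<in>vertices mT x. Wv v > 0"
  shows "Aff x Wv i y > 0"
proof -
  define ci where "ci = Wv (x i 0) - cpa_grad x Wv i \<bullet> x i 0"
  have eq: "{z. Aff x Wv i z > 0} = {z. cpa_grad x Wv i \<bullet> z > - ci}"
    by (auto simp: Aff_form ci_def)
  have "x i ` {0..CARD('n)} \<subseteq> {z. Aff x Wv i z > 0}"
  proof
    fix v assume "v \<in> x i ` {0..CARD('n)}"
    then obtain j where j: "j \<in> {0..CARD('n)}" "v = x i j" by blast
    have "Aff x Wv i v = Wv v" using Aff_interp[where x=x and i=i, OF tri_simp[OF tri i] j(1)] j by simp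
    moreover have "v \<in> vertices mT x" using i j unfolding vertices_def by blast
    ultimately show "v \<in> {z. Aff x Wv i z > 0}" using pos by simp
  qed
  then have "tsimplex x i \<subseteq> {z. Aff x Wv i z > 0}" unfolding tsimplex_def
    by (rule hull_minimal) (simp add: eq convex_halfspace_gt)
  then show ?thesis using yi by blast
qed



lemma hull_ratio_bound:
  fixes V :: "'a::real_inner set"
  assumes fin: "finite V" and tpos: "\<forall>v\<in>V. \<tau> v \<ge> 0" and tz: "\<forall>v\<in>V. \<tau> v = 0 \<longrightarrow> Q v \<le> 0"
    and Qf: "\<forall>p. Q p = q0 + qv \<bullet> p" and tf: "\<forall>p. \<tau> p = t0 + tv \<bullet> p"
  shows "\<exists>C\<ge>0. \<forall>p\<in>convex hull V. Q p \<le> C * \<tau> p"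
proof -
  define C where "C = (\<Sum>v\<in>V. \<bar>Q v\<bar> / \<tau> v)"
  have C0: "C \<ge> 0" unfolding C_def using tpos by (auto intro!: sum_nonneg)
  have "V \<subseteq> {p. Q p \<le> C * \<tau> p}"
  proof
    fix v assume v: "v \<in> V"
    show "v \<in> {p. Q p \<le> C * \<tau> p}"
    proof (cases "\<tau> v = 0")
      case True then show ?thesis using tz v by simp
    next
      case False
      then have tp: "\<tau> v > 0" using tpos v by force
      have "\<bar>Q v\<bar> / \<tau> v \<le> C" unfolding C_def
        by (rule member_le_sum[OF v _ fin]) (use tpos in auto)
      then have "\<bar>Q v\<bar> / \<tau> v * \<tau> v \<le> C * \<tau> v" using tp by (intro mult_right_mono) auto
      then show ?thesis using tp by simp
    qed
  qed
  moreover have "{p. Q p \<le> C * \<tau> p} = {p. (qv - C *\<^sub>R tv) \<bullet> p \<le> C * t0 - q0}"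
    using Qf tf by (auto simp: inner_diff_left algebra_simps)
  ultimately have "convex hull V \<subseteq> {p. Q p \<le> C * \<tau> p}"
    by (intro hull_minimal) (auto simp: convex_halfspace_le)
  then show ?thesis using C0 by blast
qed

lemma tsimplex_polytope: "polytope (tsimplex x i)"
  unfolding tsimplex_def polytope_def by blast

lemma pair_lip:
  fixes x :: "nat \<Rightarrow> nat \<Rightarrow> real^'n"
  assumes tri: "triangulation \<Omega> mT x" and i: "i \<in> {1..mT}" and k: "k \<in> {1..mT}"
  shows "\<exists>C\<ge>0. \<forall>y\<in>tsimplex x i. \<forall>z\<in>tsimplex x k.
           \<bar>Aff x Wv i y - Aff x Wv k z\<bar> \<le> C * (\<Sum>q\<in>UNIV. \<bar>y $ q - z $ q\<bar>)"
proof -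
  let ?si = "tsimplex x i" and ?sk = "tsimplex x k"
  have "bounded (?si \<union> ?sk)" using tsimplex_polytope[of x i] tsimplex_polytope[of x k]
    by (simp add: polytope_eq_bounded_polyhedron)
  then obtain B where B: "\<forall>y\<in>?si \<union> ?sk. norm y \<le> B" unfolding bounded_iff by blast
  define T where "T = 2 * real CARD('n) * B"
  define \<Phi> where "\<Phi> y z = (\<Sum>q\<in>UNIV. \<bar>y $ q - z $ q\<bar>)" for y z :: "real^'n"
  have PhiT: "\<Phi> y z \<le> T" if "y \<in> ?si" "z \<in> ?sk" for y z
  proof -
    have "\<Phi> y z \<le> (\<Sum>q\<in>(UNIV::'n set). 2 * B)" unfolding \<Phi>_def
    proof (rule sum_mono)
      fix q
      have "\<bar>y $ q\<bar> \<le> B" "\<bar>z $ q\<bar> \<le> B" using B that component_le_norm_cart[of y q] component_le_norm_cart[of z q] by force+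
      then show "\<bar>y $ q - z $ q\<bar> \<le> 2 * B" by linarith
    qed
    then show ?thesis by (simp add: T_def)
  qed
  define E where "E = (UNIV :: 'n set) \<rightarrow>\<^sub>E {-1, 1::real}"
  have finE: "finite E" unfolding E_def by (rule finite_PiE) auto
  define H where "H \<epsilon> = {p :: ((real^'n) \<times> (real^'n)) \<times> real.
      ((vec_lambda \<epsilon>, - vec_lambda \<epsilon>), -1) \<bullet> p \<le> 0}" for \<epsilon>
  have Hmem: "((y, z), s) \<in> H \<epsilon> \<longleftrightarrow> (\<Sum>q\<in>UNIV. \<epsilon> q * (y $ q - z $ q)) \<le> s" for y z s \<epsilon>
    by (simp add: H_def inner_vec_def sum_subtractf algebra_simps sum_negf)
  define P where "P = ((?si \<times> ?sk) \<times> {0..T}) \<inter> \<Inter> (H ` E)"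
  have "polytope ((?si \<times> ?sk) \<times> {0..T})"
    by (intro polytope_Times tsimplex_polytope) (metis interval_cbox polytope_interval)
  moreover have "polyhedron (\<Inter> (H ` E))"
    using finE by (intro polyhedron_Inter) (auto simp: H_def polyhedron_halfspace_le)
  ultimately have "polyhedron P" "bounded ((?si \<times> ?sk) \<times> {0..T})"
    unfolding P_def by (auto simp: polytope_eq_bounded_polyhedron)
  then have "polytope P" unfolding polytope_eq_bounded_polyhedron P_def
    by (auto intro: bounded_subset)
  then obtain V where fV: "finite V" and PV: "P = convex hull V" unfolding polytope_def by blast
  have VP: "V \<subseteq> P" unfolding PV by (rule hull_subset)
  have Pmem: "((y, z), \<Phi> y z) \<in> P" if "y \<in> ?si" "z \<in> ?sk" for y z
  proof -
    have "(\<Sum>q\<in>UNIV. \<epsilon> q * (y $ q - z $ q)) \<le> \<Phi> y z" if "\<epsilon> \<in> E" for \<epsilon>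
      unfolding \<Phi>_def
    proof (rule sum_mono)
      fix q have "\<epsilon> q = -1 \<or> \<epsilon> q = 1" using that by (auto simp: E_def)
      then show "\<epsilon> q * (y $ q - z $ q) \<le> \<bar>y $ q - z $ q\<bar>" by auto
    qed
    then show ?thesis using that PhiT[OF that] unfolding P_def
      by (auto simp: Hmem \<Phi>_def intro!: sum_nonneg)
  qed
  have Vz: "y = z" if "((y, z), 0) \<in> P" for y z
  proof -
    define \<epsilon> where "\<epsilon> q = (if y $ q - z $ q \<ge> 0 then 1 else -1 :: real)" for q
    have "\<epsilon> \<in> E" unfolding E_def \<epsilon>_def by (auto simp: PiE_iff split: if_splits)
    then have "(\<Sum>q\<in>UNIV. \<epsilon> q * (y $ q - z $ q)) \<le> 0" using that Hmem unfolding P_def by blast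
    moreover have "(\<Sum>q\<in>UNIV. \<epsilon> q * (y $ q - z $ q)) = (\<Sum>q\<in>UNIV. \<bar>y $ q - z $ q\<bar>)"
      by (rule sum.cong) (auto simp: \<epsilon>_def)
    ultimately have "(\<Sum>q\<in>UNIV. \<bar>y $ q - z $ q\<bar>) = 0" by (simp add: sum_nonneg order.antisym)
    then have "\<forall>q\<in>UNIV. \<bar>y $ q - z $ q\<bar> = 0" by (subst (asm) sum_nonneg_eq_0_iff) auto
    then show ?thesis by (simp add: vec_eq_iff)
  qed
  define ci where "ci = Wv (x i 0) - cpa_grad x Wv i \<bullet> x i 0"
  define ck where "ck = Wv (x k 0) - cpa_grad x Wv k \<bullet> x k 0"
  have Vcond: "\<forall>v\<in>V. snd v \<ge> 0" "\<forall>v\<in>V. snd v = 0 \<longrightarrow> (\<lambda>p. Aff x Wv i (fst (fst p)) - Aff x Wv k (snd (fst p))) v \<le> 0"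
      "\<forall>v\<in>V. snd v = 0 \<longrightarrow> (\<lambda>p. Aff x Wv k (snd (fst p)) - Aff x Wv i (fst (fst p))) v \<le> 0"
  proof -
    { fix v assume v: "v \<in> V"
      obtain y z s where vv: "v = ((y, z), s)" by (metis prod.exhaust)
      have inP: "((y, z), s) \<in> P" using v VP vv by auto
      then have yz: "y \<in> ?si" "z \<in> ?sk" "s \<ge> 0" unfolding P_def by auto
      have "snd v \<ge> 0" using yz vv by simp
      moreover have "Aff x Wv i y = Aff x Wv k z" if "s = 0"
        using Vz[of y z] inP that Aff_consistent[OF tri i k, of y] yz by auto
      ultimately have "snd v \<ge> 0 \<and> (snd v = 0 \<longrightarrow> Aff x Wv i (fst (fst v)) = Aff x Wv k (snd (fst v)))"
        using vv by auto }
    then show "\<forall>v\<in>V. snd v \<ge> 0" "\<forall>v\<in>V. snd v = 0 \<longrightarrow> (\<lambda>p. Aff x Wv i (fst (fst p)) - Aff x Wv k (snd (fst p))) v \<le> 0"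
      "\<forall>v\<in>V. snd v = 0 \<longrightarrow> (\<lambda>p. Aff x Wv k (snd (fst p)) - Aff x Wv i (fst (fst p))) v \<le> 0"
      by auto
  qed
  have tf: "\<forall>p. snd p = 0 + ((0::real^'n, 0::real^'n), 1::real) \<bullet> p"
  proof
    fix p :: "((real^'n) \<times> (real^'n)) \<times> real"
    obtain y z s where "p = ((y, z), s)" by (metis prod.exhaust)
    then show "snd p = 0 + ((0::real^'n, 0::real^'n), 1::real) \<bullet> p" by simp
  qed
  have Qf1: "\<forall>p. (\<lambda>p. Aff x Wv i (fst (fst p)) - Aff x Wv k (snd (fst p))) p
      = (ci - ck) + ((cpa_grad x Wv i, - cpa_grad x Wv k), 0::real) \<bullet> p"
  proof
    fix p :: "((real^'n) \<times> (real^'n)) \<times> real"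
    obtain y z s where "p = ((y, z), s)" by (metis prod.exhaust)
    then show "(\<lambda>p. Aff x Wv i (fst (fst p)) - Aff x Wv k (snd (fst p))) p
      = (ci - ck) + ((cpa_grad x Wv i, - cpa_grad x Wv k), 0::real) \<bullet> p"
      by (simp add: Aff_form ci_def ck_def)
  qed
  have Qf2: "\<forall>p. (\<lambda>p. Aff x Wv k (snd (fst p)) - Aff x Wv i (fst (fst p))) p
      = (ck - ci) + ((- cpa_grad x Wv i, cpa_grad x Wv k), 0::real) \<bullet> p"
  proof
    fix p :: "((real^'n) \<times> (real^'n)) \<times> real"
    obtain y z s where "p = ((y, z), s)" by (metis prod.exhaust)
    then show "(\<lambda>p. Aff x Wv k (snd (fst p)) - Aff x Wv i (fst (fst p))) p
      = (ck - ci) + ((- cpa_grad x Wv i, cpa_grad x Wv k), 0::real) \<bullet> p"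
      by (simp add: Aff_form ci_def ck_def)
  qed
  obtain C1 where C1: "C1 \<ge> 0" "\<forall>p\<in>convex hull V. (\<lambda>p. Aff x Wv i (fst (fst p)) - Aff x Wv k (snd (fst p))) p \<le> C1 * snd p"
    using hull_ratio_bound[OF fV Vcond(1) Vcond(2) Qf1 tf] by blast
  obtain C2 where C2: "C2 \<ge> 0" "\<forall>p\<in>convex hull V. (\<lambda>p. Aff x Wv k (snd (fst p)) - Aff x Wv i (fst (fst p))) p \<le> C2 * snd p"
    using hull_ratio_bound[OF fV Vcond(1) Vcond(3) Qf2 tf] by blast
  show ?thesis
  proof (intro exI[of _ "C1 + C2"] conjI ballI)
    show "0 \<le> C1 + C2" using C1 C2 by simp
    fix y z assume y: "y \<in> ?si" and z: "z \<in> ?sk"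
    have p: "((y, z), \<Phi> y z) \<in> convex hull V" using Pmem[OF y z] PV by simp
    have "\<Phi> y z \<ge> 0" unfolding \<Phi>_def by (auto intro!: sum_nonneg)
    then have "C1 * \<Phi> y z \<le> (C1 + C2) * \<Phi> y z" "C2 * \<Phi> y z \<le> (C1 + C2) * \<Phi> y z"
      using C1 C2 by (auto intro!: mult_right_mono)
    then show "\<bar>Aff x Wv i y - Aff x Wv k z\<bar> \<le> (C1 + C2) * (\<Sum>q\<in>UNIV. \<bar>y $ q - z $ q\<bar>)"
      using C1(2) C2(2) p unfolding \<Phi>_def by fastforce
  qed
qed


lemma cpa_lipschitz:
  fixes x :: "nat \<Rightarrow> nat \<Rightarrow> real^'n"
  assumes tri: "triangulation \<Omega> mT x"
  shows "\<exists>L. L-lipschitz_on \<Omega> (cpa mT x Wv)"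
proof -
  let ?I = "{1..mT}"
  have "\<forall>ik\<in>?I \<times> ?I. \<exists>C\<ge>0. \<forall>y\<in>tsimplex x (fst ik). \<forall>z\<in>tsimplex x (snd ik).
           \<bar>Aff x Wv (fst ik) y - Aff x Wv (snd ik) z\<bar> \<le> C * (\<Sum>q\<in>UNIV. \<bar>y $ q - z $ q\<bar>)"
    using pair_lip[OF tri] by auto
  then obtain Cf where Cf: "\<forall>ik\<in>?I \<times> ?I. Cf ik \<ge> 0 \<and> (\<forall>y\<in>tsimplex x (fst ik). \<forall>z\<in>tsimplex x (snd ik).
           \<bar>Aff x Wv (fst ik) y - Aff x Wv (snd ik) z\<bar> \<le> Cf ik * (\<Sum>q\<in>UNIV. \<bar>y $ q - z $ q\<bar>))"
    by (rule bchoice[THEN exE]) blast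
  define L where "L = (\<Sum>ik\<in>?I \<times> ?I. Cf ik) * real CARD('n)"
  have Om: "\<Omega> = (\<Union>i\<in>?I. tsimplex x i)" using tri unfolding triangulation_def by simp
  have "0 \<le> (\<Sum>ik\<in>?I \<times> ?I. Cf ik)" using Cf by (intro sum_nonneg) auto
  then have L0: "L \<ge> 0" unfolding L_def by simp
  show ?thesis
  proof (rule exI, rule lipschitz_onI[OF _ L0])
    fix y z assume y: "y \<in> \<Omega>" and z: "z \<in> \<Omega>"
    obtain i where i: "i \<in> ?I" "y \<in> tsimplex x i" using y Om by blast
    obtain k where k: "k \<in> ?I" "z \<in> tsimplex x k" using z Om by blast
    have ik: "(i, k) \<in> ?I \<times> ?I" using i k by simp
    have "dist (cpa mT x Wv y) (cpa mT x Wv z) = \<bar>Aff x Wv i y - Aff x Wv k z\<bar>"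
      using cpa_eq[OF tri i] cpa_eq[OF tri k] by (simp add: dist_real_def)
    also have "\<dots> \<le> Cf (i, k) * (\<Sum>q\<in>UNIV. \<bar>y $ q - z $ q\<bar>)" using Cf ik i k by auto
    also have "\<dots> \<le> Cf (i, k) * (real CARD('n) * dist y z)"
    proof (rule mult_left_mono)
      have "(\<Sum>q\<in>UNIV. \<bar>y $ q - z $ q\<bar>) \<le> (\<Sum>q\<in>(UNIV::'n set). dist y z)"
        by (rule sum_mono) (metis component_le_norm_cart dist_norm vector_minus_component)
      then show "(\<Sum>q\<in>UNIV. \<bar>y $ q - z $ q\<bar>) \<le> real CARD('n) * dist y z" by simp
      show "0 \<le> Cf (i, k)" using Cf ik by auto
    qed
    also have "\<dots> \<le> L * dist y z" unfolding L_def
    proof -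
      have "Cf (i, k) \<le> (\<Sum>ik\<in>?I \<times> ?I. Cf ik)"
        by (rule member_le_sum[OF ik]) (use Cf in auto)
      then show "Cf (i, k) * (real CARD('n) * dist y z) \<le> (\<Sum>ik\<in>?I \<times> ?I. Cf ik) * real CARD('n) * dist y z"
        by (simp add: mult.assoc mult_right_mono)
    qed
    finally show "dist (cpa mT x Wv y) (cpa mT x Wv z) \<le> L * dist y z" .
  qed
qed

lemma cpa_pos:
  fixes x :: "nat \<Rightarrow> nat \<Rightarrow> real^'n"
  assumes tri: "triangulation \<Omega> mT x" and pos: "\<forall>v\<in>vertices mT x. Wv v > 0" and y: "y \<in> \<Omega>"
  shows "cpa mT x Wv y > 0"
proof -
  have "\<Omega> = (\<Union>i\<in>{1..mT}. tsimplex x i)" using tri unfolding triangulation_def by simp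
  then obtain i where i: "i \<in> {1..mT}" "y \<in> tsimplex x i" using y by blast
  show ?thesis using cpa_eq[OF tri i] Aff_pos[OF tri i pos] by simp
qed

lemma freq_ev:
  fixes S :: "(real^'n) set"
  assumes cvx: "convex S" and cl: "closed S"
    and nev: "\<not> eventually (\<lambda>h. y + h *\<^sub>R v \<notin> S) (at_right 0)"
  shows "eventually (\<lambda>h. y + h *\<^sub>R v \<in> S) (at_right 0)"
proof -
  have lim: "((\<lambda>h. y + h *\<^sub>R v) \<longlongrightarrow> y) (at_right 0)"
    by (auto intro!: tendsto_eq_intros)
  have yS: "y \<in> S"
  proof (rule ccontr)
    assume "y \<notin> S"
    then have "eventually (\<lambda>h. y + h *\<^sub>R v \<in> - S) (at_right 0)"
      using topological_tendstoD[OF lim, of "- S"] cl by auto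
    then show False using nev by simp
  qed
  from nev obtain h1 where h1: "h1 > 0" "h1 < 1" "y + h1 *\<^sub>R v \<in> S"
    unfolding eventually_at_right_field by (metis zero_less_one)
  show ?thesis unfolding eventually_at_right_field
  proof (intro exI[of _ h1] conjI allI impI)
    show "h1 > 0" by fact
    fix h :: real assume "h > 0" "h < h1"
    then have u: "0 \<le> h / h1" "h / h1 \<le> 1" using h1 by auto
    have "(1 - h / h1) *\<^sub>R y + (h / h1) *\<^sub>R (y + h1 *\<^sub>R v) \<in> S"
      using cvx yS h1(3) u by (auto simp: convex_alt)
    moreover have "(1 - h / h1) *\<^sub>R y + (h / h1) *\<^sub>R (y + h1 *\<^sub>R v) = y + h *\<^sub>R v"
      using h1 by (simp add: algebra_simps)
    ultimately show "y + h *\<^sub>R v \<in> S" by simp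
  qed
qed

lemma dir_simplex:
  fixes x :: "nat \<Rightarrow> nat \<Rightarrow> real^'n"
  assumes tri: "triangulation \<Omega> mT x" and y: "y \<in> interior \<Omega>"
  shows "\<exists>i\<in>{1..mT}. y \<in> tsimplex x i \<and> eventually (\<lambda>h. y + h *\<^sub>R v \<in> tsimplex x i) (at_right 0)"
proof (rule ccontr)
  assume nex: "\<not> ?thesis"
  have lim: "((\<lambda>h. y + h *\<^sub>R v) \<longlongrightarrow> y) (at_right 0)"
    by (auto intro!: tendsto_eq_intros)
  have clo: "closed (tsimplex x i)" for i
    unfolding tsimplex_def by (simp add: compact_imp_closed finite_imp_compact_convex_hull)
  have cvx: "convex (tsimplex x i)" for i unfolding tsimplex_def by simp
  have ev_in_imp: "y \<in> tsimplex x i" if "eventually (\<lambda>h. y + h *\<^sub>R v \<in> tsimplex x i) (at_right 0)" for i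
    using Lim_in_closed_set[OF clo that _ lim] by simp
  have "\<forall>i\<in>{1..mT}. eventually (\<lambda>h. y + h *\<^sub>R v \<notin> tsimplex x i) (at_right 0)"
  proof
    fix i assume i: "i \<in> {1..mT}"
    show "eventually (\<lambda>h. y + h *\<^sub>R v \<notin> tsimplex x i) (at_right 0)"
    proof (rule ccontr)
      assume "\<not> eventually (\<lambda>h. y + h *\<^sub>R v \<notin> tsimplex x i) (at_right 0)"
      then have "eventually (\<lambda>h. y + h *\<^sub>R v \<in> tsimplex x i) (at_right 0)"
        by (rule freq_ev[OF cvx clo])
      then show False using nex i ev_in_imp by blast
    qed
  qed
  then have e1: "eventually (\<lambda>h. \<forall>i\<in>{1..mT}. y + h *\<^sub>R v \<notin> tsimplex x i) (at_right 0)"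
    by (rule eventually_ball_finite[rotated]) simp
  have e2: "eventually (\<lambda>h. y + h *\<^sub>R v \<in> interior \<Omega>) (at_right 0)"
    using topological_tendstoD[OF lim, of "interior \<Omega>"] y by auto
  have Om: "\<Omega> = (\<Union>i\<in>{1..mT}. tsimplex x i)" using tri unfolding triangulation_def by simp
  have "eventually (\<lambda>h. False) (at_right (0::real))"
    using eventually_conj[OF e1 e2] by eventually_elim (use Om interior_subset in blast)
  then show False by simp
qed

lemma dini_val:
  fixes x :: "nat \<Rightarrow> nat \<Rightarrow> real^'n"
  assumes tri: "triangulation \<Omega> mT x" and i: "i \<in> {1..mT}" and yi: "y \<in> tsimplex x i"
    and ev: "eventually (\<lambda>h. y + h *\<^sub>R v \<in> tsimplex x i) (at_right 0)"
  shows "dini_upper (cpa mT x Wv) y v = ereal (cpa_grad x Wv i \<bullet> v)"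
proof -
  have "eventually (\<lambda>h. ereal ((cpa mT x Wv (y + h *\<^sub>R v) - cpa mT x Wv y) / h) = ereal (cpa_grad x Wv i \<bullet> v)) (at_right 0)"
    using eventually_conj[OF ev eventually_at_right_less]
  proof eventually_elim
    case (elim h)
    then have "cpa mT x Wv (y + h *\<^sub>R v) - cpa mT x Wv y = h * (cpa_grad x Wv i \<bullet> v)"
      using cpa_eq[where Wv=Wv, OF tri i, of "y + h *\<^sub>R v"] cpa_eq[where Wv=Wv, OF tri i yi]
      by (simp add: Aff_def algebra_simps inner_add_right)
    then show ?case using elim by simp
  qed
  then have "((\<lambda>h. ereal ((cpa mT x Wv (y + h *\<^sub>R v) - cpa mT x Wv y) / h)) \<longlongrightarrow> ereal (cpa_grad x Wv i \<bullet> v)) (at_right 0)"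
    by (rule tendsto_eventually)
  then show ?thesis unfolding dini_upper_def by (intro lim_imp_Limsup) simp_all
qed


lemma l1_sq:
  fixes h :: "real^'n"
  shows "(\<Sum>q\<in>UNIV. \<bar>h $ q\<bar>)^2 \<le> real CARD('n) * (norm h)^2"
proof -
  have "(\<Sum>q\<in>UNIV. 1 * \<bar>h $ q\<bar>)^2 \<le> (\<Sum>q\<in>(UNIV::'n set). 1^2) * (\<Sum>q\<in>UNIV. \<bar>h $ q\<bar>^2)"
    by (rule Cauchy_Schwarz_ineq_sum)
  moreover have "(norm h)^2 = h \<bullet> h" by (simp add: dot_square_norm)
  moreover have "h \<bullet> h = (\<Sum>q\<in>UNIV. \<bar>h $ q\<bar>^2)" by (simp add: inner_vec_def power2_eq_square)
  ultimately show ?thesis by simp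
qed

lemma interp_err:
  fixes \<phi> :: "real^'n \<Rightarrow> real" and x :: "nat \<Rightarrow> nat \<Rightarrow> real^'n"
  assumes cvx: "convex S" and pS: "\<forall>j\<in>{0..CARD('n)}. x i j \<in> S" and yS: "y \<in> S"
    and lpos: "\<forall>j\<in>{0..CARD('n)}. lam j \<ge> 0" and lsum: "(\<Sum>j=0..CARD('n). lam j) = 1"
    and ysum: "y = (\<Sum>j=0..CARD('n). lam j *\<^sub>R x i j)"
    and d1: "\<forall>y\<in>S. (\<phi> has_derivative (\<lambda>h. \<Sum>q\<in>UNIV. d1 q y * h $ q)) (at y within S)"
    and d2: "\<forall>q. \<forall>y\<in>S. (d1 q has_derivative (\<lambda>h. \<Sum>r\<in>UNIV. d2 q r y * h $ r)) (at y within S)"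
    and bnd: "\<forall>q r. \<forall>\<xi>\<in>S. \<bar>d2 q r \<xi>\<bar> \<le> \<beta>" and b0: "\<beta> \<ge> 0"
  shows "\<bar>\<phi> y - (\<Sum>j=0..CARD('n). lam j * \<phi> (x i j))\<bar> \<le> (\<Sum>j=0..CARD('n). lam j * (\<beta> * cij x i j))"
proof -
  define n where "n = CARD('n)"
  define J where "J = {0..n}"
  define p where "p = x i"
  define a where "a j = p j - p 0" for j
  define A where "A = y - p 0"
  define dv where "dv = (\<chi> q. d1 q (p 0))"
  define N1 where "N1 h = (\<Sum>q\<in>UNIV. \<bar>h $ q\<bar>)" for h :: "real^'n"
  define r where "r = \<phi> y - \<phi> (p 0) - dv \<bullet> A"
  define rj where "rj j = \<phi> (p j) - \<phi> (p 0) - dv \<bullet> a j" for j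
  define Mx where "Mx = Max ((\<lambda>k. norm (p k - p 0)) ` {1..n})"
  have n1: "n \<ge> 1" unfolding n_def by (simp add: Suc_le_eq)
  have p0: "p 0 \<in> S" using pS by (simp add: p_def)
  have pj: "p j \<in> S" if "j \<in> J" for j using pS that by (simp add: p_def J_def n_def)
  have tay: "\<bar>\<phi> b - \<phi> (p 0) - dv \<bullet> (b - p 0)\<bar> \<le> \<beta> / 2 * N1 (b - p 0) ^ 2" if "b \<in> S" for b
    using taylor_bound[OF cvx p0 that d1 d2 bnd] by (simp add: dv_def inner_vec_def N1_def)
  have tr: "\<bar>r\<bar> \<le> \<beta> / 2 * N1 A ^ 2" using tay[OF yS] by (simp add: r_def A_def)
  have trj: "\<bar>rj j\<bar> \<le> \<beta> / 2 * N1 (a j) ^ 2" if "j \<in> J" for j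
    using tay[OF pj[OF that]] by (simp add: rj_def a_def)
  have Asum: "A = (\<Sum>j\<in>J. lam j *\<^sub>R a j)"
    using ysum lsum by (simp add: A_def a_def J_def n_def p_def scaleR_diff_right sum_subtractf
        flip: scaleR_sum_left)
  have LA: "dv \<bullet> A = (\<Sum>j\<in>J. lam j * (dv \<bullet> a j))"
    unfolding Asum by (simp add: inner_sum_right)
  have diff: "\<phi> y - (\<Sum>j\<in>J. lam j * \<phi> (p j)) = r - (\<Sum>j\<in>J. lam j * rj j)"
  proof -
    have "(\<Sum>j\<in>J. lam j * rj j) = (\<Sum>j\<in>J. lam j * \<phi> (p j)) - (\<Sum>j\<in>J. lam j) * \<phi> (p 0) - (\<Sum>j\<in>J. lam j * (dv \<bullet> a j))"
      by (simp add: rj_def algebra_simps sum_subtractf sum_distrib_right sum.distrib)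
    then show ?thesis using lsum LA by (simp add: r_def J_def n_def)
  qed
  have "\<bar>r - (\<Sum>j\<in>J. lam j * rj j)\<bar> \<le> \<bar>r\<bar> + (\<Sum>j\<in>J. lam j * \<bar>rj j\<bar>)"
  proof -
    have "\<bar>(\<Sum>j\<in>J. lam j * rj j)\<bar> \<le> (\<Sum>j\<in>J. \<bar>lam j * rj j\<bar>)" by (rule sum_abs)
    also have "\<dots> = (\<Sum>j\<in>J. lam j * \<bar>rj j\<bar>)"
      using lpos by (intro sum.cong) (auto simp: abs_mult J_def n_def)
    finally show ?thesis by linarith
  qed
  also have "\<dots> \<le> \<beta> / 2 * (real n * (norm A)^2) + (\<Sum>j\<in>J. lam j * (\<beta> / 2 * (real n * (norm (a j))^2)))"
  proof (rule add_mono)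
    show "\<bar>r\<bar> \<le> \<beta> / 2 * (real n * (norm A)^2)"
      using tr l1_sq[of A] b0 unfolding N1_def n_def by (meson order_trans mult_left_mono divide_nonneg_nonneg zero_le_numeral)
    show "(\<Sum>j\<in>J. lam j * \<bar>rj j\<bar>) \<le> (\<Sum>j\<in>J. lam j * (\<beta> / 2 * (real n * (norm (a j))^2)))"
    proof (rule sum_mono)
      fix j assume j: "j \<in> J"
      have "\<bar>rj j\<bar> \<le> \<beta> / 2 * (real n * (norm (a j))^2)"
        using trj[OF j] l1_sq[of "a j"] b0 unfolding N1_def n_def by (meson order_trans mult_left_mono divide_nonneg_nonneg zero_le_numeral)
      then show "lam j * \<bar>rj j\<bar> \<le> lam j * (\<beta> / 2 * (real n * (norm (a j))^2))"
        using lpos j by (intro mult_left_mono) (auto simp: J_def n_def)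
    qed
  qed
  also have "\<dots> \<le> \<beta> / 2 * (real n * ((\<Sum>j\<in>J. lam j * norm (a j)) * Mx)) + (\<Sum>j\<in>J. lam j * (\<beta> / 2 * (real n * (norm (a j))^2)))"
  proof -
    have aMx: "norm (a j) \<le> Mx" if "j \<in> J" for j
    proof (cases "j = 0")
      case True
      have "norm (a 1) \<le> Mx" unfolding Mx_def a_def using n1 by (intro Max_ge) auto
      then show ?thesis using True by (simp add: a_def order_trans[OF norm_ge_zero])
    next
      case False then show ?thesis unfolding Mx_def a_def using that by (intro Max_ge) (auto simp: J_def)
    qed
    define S1 where "S1 = (\<Sum>j\<in>J. lam j * norm (a j))"
    have "norm A \<le> (\<Sum>j\<in>J. norm (lam j *\<^sub>R a j))" unfolding Asum by (rule norm_sum)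
    also have "\<dots> = S1" unfolding S1_def using lpos by (intro sum.cong) (auto simp: J_def n_def)
    finally have AS1: "norm A \<le> S1" .
    have "S1 \<le> (\<Sum>j\<in>J. lam j * Mx)" unfolding S1_def
      using lpos aMx by (intro sum_mono mult_left_mono) (auto simp: J_def n_def)
    also have "\<dots> = Mx" using lsum by (simp add: sum_distrib_right[symmetric] J_def n_def)
    finally have "S1 \<le> Mx" .
    then have "norm A * norm A \<le> S1 * Mx" using AS1 order_trans[OF norm_ge_zero AS1] by (intro mult_mono) auto
    then have "(norm A)^2 \<le> S1 * Mx" by (simp add: power2_eq_square)
    then have "\<beta> / 2 * (real n * (norm A)^2) \<le> \<beta> / 2 * (real n * (S1 * Mx))"
      using b0 by (intro mult_left_mono) auto
    then show ?thesis unfolding S1_def by simp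
  qed
  also have "\<dots> = (\<Sum>j\<in>J. lam j * (\<beta> * cij x i j))"
    by (simp add: cij_def sum_distrib_left sum_distrib_right sum.distrib[symmetric] Mx_def a_def p_def n_def
        power2_eq_square algebra_simps)
  finally show ?thesis using diff by (simp add: J_def n_def p_def)
qed


lemma matnorm_le: "matnorm_inf (A :: real^'m^'n) \<le> real CARD('m) * norm A"
proof -
  have "(\<Sum>k\<in>UNIV. \<bar>A $ p $ k\<bar>) \<le> real CARD('m) * norm A" for p
  proof -
    have "(\<Sum>k\<in>UNIV. \<bar>A $ p $ k\<bar>) \<le> (\<Sum>k\<in>(UNIV::'m set). norm A)"
      by (rule sum_mono) (meson component_le_norm_cart Finite_Cartesian_Product.norm_nth_le order_trans)
    then show ?thesis by simp
  qed
  then show ?thesis unfolding matnorm_inf_def by (subst Max_le_iff) auto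
qed

lemma matnorm_ge: "(\<Sum>k\<in>UNIV. \<bar>A $ p $ k\<bar>) \<le> matnorm_inf (A :: real^'m^'n)"
  unfolding matnorm_inf_def by (rule Max_ge) auto

lemma G_bound:
  fixes G :: "real^'n \<Rightarrow> real^'m^'n" and x :: "nat \<Rightarrow> nat \<Rightarrow> real^'n"
  assumes cont: "continuous_on \<Omega> G" and sub: "tsimplex x i \<subseteq> \<Omega>" and yi: "y \<in> tsimplex x i"
    and uh: "uh \<ge> 0" and u: "\<forall>k. \<bar>u $ k\<bar> \<le> uh"
  shows "\<bar>(G y *v u) $ p\<bar> \<le> ghat G x i * uh"
proof -
  have "compact (tsimplex x i)" unfolding tsimplex_def by (simp add: finite_imp_compact_convex_hull)
  then have "compact (G ` tsimplex x i)"
    using cont sub by (intro compact_continuous_image) (auto intro: continuous_on_subset)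
  then have "bounded (G ` tsimplex x i)" by (rule compact_imp_bounded)
  then obtain B where B: "\<forall>z\<in>tsimplex x i. norm (G z) \<le> B"
    unfolding bounded_iff by auto
  have bdd: "bdd_above ((\<lambda>z. matnorm_inf (G z)) ` tsimplex x i)"
    unfolding bdd_above_def
    by (rule exI[of _ "real CARD('m) * B"]) (use B matnorm_le in \<open>force intro: order_trans mult_left_mono\<close>)
  have mg: "matnorm_inf (G y) \<le> ghat G x i"
    unfolding ghat_def by (rule cSUP_upper[OF yi bdd])
  have "\<bar>(G y *v u) $ p\<bar> = \<bar>\<Sum>k\<in>UNIV. G y $ p $ k * u $ k\<bar>"
    by (simp add: matrix_vector_mult_def)
  also have "\<dots> \<le> (\<Sum>k\<in>UNIV. \<bar>G y $ p $ k\<bar> * uh)"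
    by (rule order_trans[OF sum_abs], rule sum_mono) (use u in \<open>auto simp: abs_mult intro: mult_left_mono\<close>)
  also have "\<dots> = (\<Sum>k\<in>UNIV. \<bar>G y $ p $ k\<bar>) * uh" by (simp add: sum_distrib_right)
  also have "\<dots> \<le> matnorm_inf (G y) * uh" using uh by (intro mult_right_mono matnorm_ge)
  also have "\<dots> \<le> ghat G x i * uh" using uh mg by (intro mult_right_mono)
  finally show ?thesis .
qed


lemma dini_core:
  fixes f :: "real^'n \<Rightarrow> real^'n" and G :: "real^'n \<Rightarrow> real^'m^'n" and x :: "nat \<Rightarrow> nat \<Rightarrow> real^'n"
  assumes tri: "triangulation \<Omega> mT x"
    and fC2: "continuous_on \<Omega> f \<and> (\<forall>i\<in>{1..mT}. \<forall>p. C2_on (\<lambda>y. f y $ p) (tsimplex x i))"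
    and GC: "continuous_on \<Omega> G"
    and beta: "\<forall>i\<in>{1..mT}. \<forall>p d2. second_partials (\<lambda>y. f y $ p) (tsimplex x i) d2 \<longrightarrow>
                 (\<forall>q r. \<forall>\<xi>\<in>tsimplex x i. \<bar>d2 q r \<xi>\<bar> \<le> \<beta> i)"
    and cond: "cpa_conditions f G mT x \<beta> A1 Wv l b2 uh"
    and i: "i \<in> {1..mT}" and yi: "y \<in> tsimplex x i" and yA: "y \<notin> A1"
    and u: "\<forall>k. \<bar>u $ k\<bar> \<le> uh"
  shows "cpa_grad x Wv i \<bullet> (f y + G y *v u) \<le> - b2"
proof -
  define n where "n = CARD('n)"
  define J where "J = {0..n}"
  define g where "g = cpa_grad x Wv i"
  define \<sigma> where "\<sigma> = tsimplex x i"
  have uh0: "uh > 0" using cond by (simp add: cpa_conditions_def)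
  have lg: "\<forall>k. \<bar>g $ k\<bar> \<le> l i $ k" using cond i by (simp add: cpa_conditions_def g_def)
  have l0: "\<forall>k. 0 \<le> l i $ k" using lg by (meson abs_ge_zero order_trans)
  have iI1: "i \<in> I1 mT x A1" using i yi yA by (auto simp: I1_def)
  have Dle: "\<forall>j\<in>J. Dij f G x \<beta> Wv l uh i j \<le> - b2" using cond iI1 by (simp add: cpa_conditions_def J_def n_def)
  have Om: "\<Omega> = (\<Union>i\<in>{1..mT}. tsimplex x i)" using tri unfolding triangulation_def by simp
  have sub: "\<sigma> \<subseteq> \<Omega>" using Om i by (auto simp: \<sigma>_def)
  have cvx: "convex \<sigma>" by (simp add: \<sigma>_def tsimplex_def)
  have inj: "inj_on (x i) J" using tri_simp[OF tri i] by (simp add: J_def n_def)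
  have pS: "\<forall>j\<in>{0..CARD('n)}. x i j \<in> \<sigma>" unfolding \<sigma>_def tsimplex_def by (auto intro: hull_inc)
  obtain w where w: "\<forall>z\<in>x i ` J. 0 \<le> w z" "sum w (x i ` J) = 1" "(\<Sum>z\<in>x i ` J. w z *\<^sub>R z) = y"
    using yi convex_hull_finite[of "x i ` J"] unfolding tsimplex_def J_def n_def by auto
  define lam where "lam j = w (x i j)" for j
  have lpos: "\<forall>j\<in>{0..CARD('n)}. lam j \<ge> 0" using w(1) by (auto simp: lam_def J_def n_def)
  have lsum: "(\<Sum>j=0..CARD('n). lam j) = 1"
    using w(2) sum.reindex[OF inj, of w] by (simp add: lam_def J_def n_def)
  have ysum: "y = (\<Sum>j=0..CARD('n). lam j *\<^sub>R x i j)"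
    using w(3) sum.reindex[OF inj, of "\<lambda>z. w z *\<^sub>R z"] by (simp add: lam_def J_def n_def)
  have b0: "\<beta> i \<ge> 0"
  proof -
    obtain d2 where "second_partials (\<lambda>z. f z $ (undefined::'n)) \<sigma> d2"
      using fC2 i unfolding C2_on_def \<sigma>_def by blast
    then have "\<bar>d2 undefined undefined y\<bar> \<le> \<beta> i" using beta i yi unfolding \<sigma>_def by blast
    then show ?thesis by linarith
  qed
  define E where "E = (\<Sum>j=0..CARD('n). lam j * (\<beta> i * cij x i j))"
  have err: "\<bar>f y $ p - (\<Sum>j=0..CARD('n). lam j * f (x i j) $ p)\<bar> \<le> E" for p
  proof -
    obtain d2 where sp: "second_partials (\<lambda>z. f z $ p) \<sigma> d2"
      using fC2 i unfolding C2_on_def \<sigma>_def by blast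
    then obtain d1 where d1: "\<forall>y\<in>\<sigma>. ((\<lambda>z. f z $ p) has_derivative (\<lambda>h. \<Sum>q\<in>UNIV. d1 q y * h $ q)) (at y within \<sigma>)"
      and d2: "\<forall>q. \<forall>y\<in>\<sigma>. (d1 q has_derivative (\<lambda>h. \<Sum>r\<in>UNIV. d2 q r y * h $ r)) (at y within \<sigma>)"
      unfolding second_partials_def by blast
    have bnd: "\<forall>q r. \<forall>\<xi>\<in>\<sigma>. \<bar>d2 q r \<xi>\<bar> \<le> \<beta> i" using beta i sp unfolding \<sigma>_def by blast
    show ?thesis using interp_err[where x=x and i=i, OF cvx pS _ lpos lsum ysum d1 d2 bnd b0] yi
      by (simp add: E_def \<sigma>_def)
  qed
  define F where "F p = (\<Sum>j=0..CARD('n). lam j * f (x i j) $ p)" for p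
  have E0: "E \<ge> 0" using err[of undefined] by linarith
  have "g \<bullet> f y = (\<Sum>p\<in>UNIV. g $ p * f y $ p)" by (simp add: inner_vec_def)
  also have "\<dots> \<le> (\<Sum>p\<in>UNIV. g $ p * F p + l i $ p * E)"
  proof (rule sum_mono)
    fix p
    have "g $ p * (f y $ p - F p) \<le> \<bar>g $ p\<bar> * \<bar>f y $ p - F p\<bar>" by (simp add: abs_mult[symmetric])
    also have "\<dots> \<le> l i $ p * E" using lg l0 err[of p] by (intro mult_mono) (auto simp: F_def)
    finally show "g $ p * f y $ p \<le> g $ p * F p + l i $ p * E" by (simp add: algebra_simps)
  qed
  also have "\<dots> = (\<Sum>j=0..CARD('n). lam j * (f (x i j) \<bullet> g)) + (\<Sum>p\<in>UNIV. l i $ p) * E"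
    by (simp add: F_def sum.distrib sum_distrib_left sum_distrib_right inner_vec_def algebra_simps
        sum.swap[of _ UNIV])
  finally have t1: "g \<bullet> f y \<le> (\<Sum>j=0..CARD('n). lam j * (f (x i j) \<bullet> g)) + (\<Sum>p\<in>UNIV. l i $ p) * E" .
  have "g \<bullet> (G y *v u) = (\<Sum>p\<in>UNIV. g $ p * (G y *v u) $ p)" by (simp add: inner_vec_def)
  also have "\<dots> \<le> (\<Sum>p\<in>UNIV. l i $ p * (ghat G x i * uh))"
  proof (rule sum_mono)
    fix p
    have "g $ p * (G y *v u) $ p \<le> \<bar>g $ p\<bar> * \<bar>(G y *v u) $ p\<bar>" by (simp add: abs_mult[symmetric])
    also have "\<dots> \<le> l i $ p * (ghat G x i * uh)"
      using lg l0 G_bound[OF GC sub[unfolded \<sigma>_def] yi _ u, of p] uh0 by (intro mult_mono) auto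
    finally show "g $ p * (G y *v u) $ p \<le> l i $ p * (ghat G x i * uh)" .
  qed
  also have "\<dots> = (\<Sum>p\<in>UNIV. l i $ p) * (ghat G x i * uh)" by (simp add: sum_distrib_right)
  finally have t2: "g \<bullet> (G y *v u) \<le> (\<Sum>p\<in>UNIV. l i $ p) * (ghat G x i * uh)" .
  have "(\<Sum>j=0..CARD('n). lam j * Dij f G x \<beta> Wv l uh i j)
      = (\<Sum>j=0..CARD('n). lam j * (f (x i j) \<bullet> g)) + (\<Sum>p\<in>UNIV. l i $ p) * E
        + (\<Sum>j=0..CARD('n). lam j) * ((\<Sum>p\<in>UNIV. l i $ p) * (ghat G x i * uh))"
    apply (simp add: Dij_def E_def g_def sum.distrib sum_distrib_left sum_distrib_right algebra_simps)
    by (rule sum.swap)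
  also have "\<dots> = (\<Sum>j=0..CARD('n). lam j * (f (x i j) \<bullet> g)) + (\<Sum>p\<in>UNIV. l i $ p) * E
        + (\<Sum>p\<in>UNIV. l i $ p) * (ghat G x i * uh)" using lsum by simp
  finally have eqD: "(\<Sum>j=0..CARD('n). lam j * Dij f G x \<beta> Wv l uh i j) = \<dots>" .
  have "(\<Sum>j=0..CARD('n). lam j * Dij f G x \<beta> Wv l uh i j) \<le> (\<Sum>j=0..CARD('n). lam j * (- b2))"
    using Dle lpos by (intro sum_mono mult_left_mono) (auto simp: J_def n_def)
  also have "\<dots> = - b2" using lsum by (simp add: sum_negf flip: sum_distrib_right)
  finally have "(\<Sum>j=0..CARD('n). lam j * Dij f G x \<beta> Wv l uh i j) \<le> - b2" .
  then show ?thesis using t1 t2 eqD by (simp add: g_def inner_add_right)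
qed

theorem theorem2:
  fixes \<Omega> A1 :: "(real^'n) set"
    and f :: "real^'n \<Rightarrow> real^'n"
    and G :: "real^'n \<Rightarrow> real^'m^'n"
    and \<kappa> :: "real \<Rightarrow> real^'m"
    and mT :: nat
    and x :: "nat \<Rightarrow> nat \<Rightarrow> real^'n"
    and \<beta> :: "nat \<Rightarrow> real"
  assumes reg: "region \<Omega>"
    and f0: "f 0 = 0"
    and tri: "triangulation \<Omega> mT x"
    and fC2: "continuous_on \<Omega> f \<and> (\<forall>i\<in>{1..mT}. \<forall>p. C2_on (\<lambda>y. f y $ p) (tsimplex x i))"
    and GC2: "continuous_on \<Omega> G \<and> (\<forall>i\<in>{1..mT}. \<forall>p k. C2_on (\<lambda>y. G y $ p $ k) (tsimplex x i))"
    and A1reg: "region A1"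
    and A1sub: "A1 \<subset> \<Omega>"
    and A1bd: "frontier A1 \<subseteq> (\<Union>i\<in>{1..mT}. frontier (tsimplex x i))"
    and beta: "\<forall>i\<in>{1..mT}. \<forall>p d2. second_partials (\<lambda>y. f y $ p) (tsimplex x i) d2 \<longrightarrow>
                 (\<forall>q r. \<forall>\<xi>\<in>tsimplex x i. \<bar>d2 q r \<xi>\<bar> \<le> \<beta> i)"
  shows "(\<exists>Wv l b2 uh. cpa_conditions f G mT x \<beta> A1 Wv l b2 uh)
       \<and> (\<forall>Wv l b2 uh c.
            cpa_conditions f G mT x \<beta> A1 Wv l b2 uh \<and> b2 > 0
            \<and> A1 \<subset> {y\<in>\<Omega>. cpa mT x Wv y \<le> c} \<and> {y\<in>\<Omega>. cpa mT x Wv y \<le> c} \<subseteq> \<Omega>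
            \<and> (\<forall>t\<ge>0. \<forall>k. \<bar>\<kappa> t $ k\<bar> \<le> uh)
          \<longrightarrow> (\<exists>L. L-lipschitz_on \<Omega> (cpa mT x Wv))
            \<and> (\<forall>y\<in>\<Omega>. cpa mT x Wv y > 0)
            \<and> (\<forall>y\<in>interior (\<Omega> - A1). \<forall>u :: real^'m. (\<forall>k. \<bar>u $ k\<bar> \<le> uh) \<longrightarrow>
                 dini_upper (cpa mT x Wv) y (f y + G y *v u) \<le> ereal (- b2)))"
proof (intro conjI allI impI)
  have tri': "triangulation \<Omega> mT x" by (rule tri)
  show "\<exists>Wv l b2 uh. cpa_conditions f G mT x \<beta> A1 Wv l b2 uh"
  proof (intro exI)
    have w0: "Wbar x (\<lambda>_. 1) i = 0" for i by (simp add: Wbar_def vec_eq_iff)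
    have g0: "cpa_grad x (\<lambda>_. 1) i = 0" for i by (simp add: cpa_grad_def w0)
    show "cpa_conditions f G mT x \<beta> A1 (\<lambda>_. 1) (\<lambda>_. 0) 0 1"
      by (simp add: cpa_conditions_def Dij_def g0)
  qed
next
  fix Wv l b2 uh c
  assume h: "cpa_conditions f G mT x \<beta> A1 Wv l b2 uh \<and> b2 > 0
            \<and> A1 \<subset> {y\<in>\<Omega>. cpa mT x Wv y \<le> c} \<and> {y\<in>\<Omega>. cpa mT x Wv y \<le> c} \<subseteq> \<Omega>
            \<and> (\<forall>t\<ge>0. \<forall>k. \<bar>\<kappa> t $ k\<bar> \<le> uh)"
  then have cond: "cpa_conditions f G mT x \<beta> A1 Wv l b2 uh" by blast
  show "\<exists>L. L-lipschitz_on \<Omega> (cpa mT x Wv)" by (rule cpa_lipschitz[OF tri])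
  show "\<forall>y\<in>\<Omega>. cpa mT x Wv y > 0"
    using cpa_pos[OF tri] cond by (simp add: cpa_conditions_def)
  show "\<forall>y\<in>interior (\<Omega> - A1). \<forall>u :: real^'m. (\<forall>k. \<bar>u $ k\<bar> \<le> uh) \<longrightarrow>
                 dini_upper (cpa mT x Wv) y (f y + G y *v u) \<le> ereal (- b2)"
  proof (intro ballI allI impI)
    fix y and u :: "real^'m"
    assume y: "y \<in> interior (\<Omega> - A1)" and u: "\<forall>k. \<bar>u $ k\<bar> \<le> uh"
    have yO: "y \<in> interior \<Omega>" using y interior_mono[of "\<Omega> - A1" \<Omega>] by blast
    have yA: "y \<notin> A1" using y interior_subset by blast
    obtain i where i: "i \<in> {1..mT}" "y \<in> tsimplex x i"
      and ev: "eventually (\<lambda>h. y + h *\<^sub>R (f y + G y *v u) \<in> tsimplex x i) (at_right 0)"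
      using dir_simplex[OF tri yO] by blast
    have "dini_upper (cpa mT x Wv) y (f y + G y *v u) = ereal (cpa_grad x Wv i \<bullet> (f y + G y *v u))"
      by (rule dini_val[OF tri i ev])
    moreover have "cpa_grad x Wv i \<bullet> (f y + G y *v u) \<le> - b2"
      by (rule dini_core[OF tri fC2 conjunct1[OF GC2] beta cond i yA u])
    ultimately show "dini_upper (cpa mT x Wv) y (f y + G y *v u) \<le> ereal (- b2)" by simp
  qed
qed

end
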